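(* Let $p(x)=\sum_{k=2}^m a_kx^k$ be a real polynomial of degree $m$ (so $p(0)=p'(0)=0$), convex on an interval $[0,A]$, and suppose $p(A)>1$. Then $p(x)=1$ has a unique solution $\mu$ in $[0,A]$, and $$\mu\approx\left[\sum_{k=2}^m|a_k|^{1/k}\right]^{-1},$$ where the implied constants depend only on $m$.
   Context: $X\approx Y$ means $cY\le X\le c^{-1}Y$ for some $c>0$ depending only on $m$ (not on $A$ or the coefficients). *)

theory Defs
  imports "HOL-Analysis.Analysis"
begin

end

theory Submission
  imports Defs
begin

lemma pow_diff_expand:
  fixes t h :: real
  assumes "k \<le> Suc n"
  shows "(t+h)^k - t^k = (\<Sum>j\<le>n. (if j<k then of_nat (k choose j) * h^(k-j) else 0) * t^j)"
proof -
  have "(t+h)^k = (\<Sum>j\<le>k. of_nat (k choose j) * t^j * h^(k-j))"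
    by (rule binomial_ring)
  also have "\<dots> = (\<Sum>j<k. of_nat (k choose j) * t^j * h^(k-j)) + t^k"
    by (simp add: lessThan_Suc_atMost[symmetric])
  finally have 1: "(t+h)^k - t^k = (\<Sum>j<k. of_nat (k choose j) * h^(k-j) * t^j)"
    by (simp add: algebra_simps)
  have "(\<Sum>j\<le>n. (if j<k then of_nat (k choose j) * h^(k-j) else 0) * t^j)
      = (\<Sum>j\<in>{..n}. if j<k then of_nat (k choose j) * h^(k-j) * t^j else 0)"
    by (rule sum.cong) auto
  also have "\<dots> = (\<Sum>j\<in>{..n} \<inter> {j. j<k}. of_nat (k choose j) * h^(k-j) * t^j)"
    by (simp add: sum.inter_restrict)
  also have "{..n} \<inter> {j. j<k} = {..<k}" using assms by auto
  finally show ?thesis using 1 by simp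
qed

lemma coeff_bound:
  fixes n :: nat
  shows "\<forall>b>0. \<exists>K\<ge>0. \<forall>(c::nat\<Rightarrow>real) M. (\<forall>t\<in>{0..b}. \<bar>\<Sum>k\<le>n. c k * t^k\<bar> \<le> M) \<longrightarrow> (\<forall>k\<le>n. \<bar>c k\<bar> \<le> K*M)"
proof (induction n)
  case 0
  show ?case
  proof (intro allI impI exI[of _ 1] conjI)
    fix b :: real and c :: "nat \<Rightarrow> real" and M k
    assume "b > 0" "\<forall>t\<in>{0..b}. \<bar>\<Sum>k\<le>0. c k * t^k\<bar> \<le> M" "k \<le> (0::nat)"
    then show "\<bar>c k\<bar> \<le> 1 * M" by (auto dest: bspec[of _ _ 0])
  qed simp
next
  case (Suc n)
  show ?case
  proof (intro allI impI)
    fix b :: real assume b: "b > 0"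
    define h where "h = b/2"
    have h: "h > 0" using b by (simp add: h_def)
    obtain K1 where K1: "K1 \<ge> 0" "\<And>c M. (\<forall>t\<in>{0..h}. \<bar>\<Sum>k\<le>n. c k * t^k\<bar> \<le> M) \<Longrightarrow> (\<forall>k\<le>n. \<bar>c k\<bar> \<le> K1*M)"
      using Suc.IH h by blast
    obtain K2 where K2: "K2 \<ge> 0" "\<And>c M. (\<forall>t\<in>{0..b}. \<bar>\<Sum>k\<le>n. c k * t^k\<bar> \<le> M) \<Longrightarrow> (\<forall>k\<le>n. \<bar>c k\<bar> \<le> K2*M)"
      using Suc.IH b by blast
    define B where "B = 2*K1/h"
    have B: "B \<ge> 0" using K1 h by (simp add: B_def)
    define K where "K = max B (K2*(1+B*b^Suc n))"
    show "\<exists>K\<ge>0. \<forall>(c::nat\<Rightarrow>real) M. (\<forall>t\<in>{0..b}. \<bar>\<Sum>k\<le>Suc n. c k * t^k\<bar> \<le> M) \<longrightarrow> (\<forall>k\<le>Suc n. \<bar>c k\<bar> \<le> K*M)"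
    proof (intro exI[of _ K] conjI allI impI)
      show "K \<ge> 0" using B by (simp add: K_def)
      fix c :: "nat \<Rightarrow> real" and M k
      assume bd: "\<forall>t\<in>{0..b}. \<bar>\<Sum>k\<le>Suc n. c k * t^k\<bar> \<le> M" and k: "k \<le> Suc n"
      have M: "M \<ge> 0" using bd b by (auto dest: bspec[of _ _ 0])
      define e where "e j = (\<Sum>k\<le>Suc n. c k * (if j<k then of_nat (k choose j) * h^(k-j) else 0))" for j
      have D: "(\<Sum>k\<le>Suc n. c k*(t+h)^k) - (\<Sum>k\<le>Suc n. c k*t^k) = (\<Sum>j\<le>n. e j * t^j)" for t
      proof -
        have "(\<Sum>k\<le>Suc n. c k*(t+h)^k) - (\<Sum>k\<le>Suc n. c k*t^k) = (\<Sum>k\<le>Suc n. c k*((t+h)^k - t^k))"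
          by (simp add: sum_subtractf algebra_simps)
        also have "\<dots> = (\<Sum>k\<le>Suc n. \<Sum>j\<le>n. c k * (if j<k then of_nat (k choose j) * h^(k-j) else 0) * t^j)"
          by (rule sum.cong[OF refl]) (simp add: pow_diff_expand sum_distrib_left mult.assoc)
        also have "\<dots> = (\<Sum>j\<le>n. \<Sum>k\<le>Suc n. c k * (if j<k then of_nat (k choose j) * h^(k-j) else 0) * t^j)"
          by (rule sum.swap)
        also have "\<dots> = (\<Sum>j\<le>n. e j * t^j)"
          unfolding e_def sum_distrib_right by (rule refl)
        finally show ?thesis .
      qed
      have en: "e n = c (Suc n) * (of_nat (Suc n) * h)"
        by (simp add: e_def)
      have "\<forall>t\<in>{0..h}. \<bar>\<Sum>j\<le>n. e j * t^j\<bar> \<le> 2*M"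
      proof
        fix t assume t: "t \<in> {0..h}"
        have "t + h \<in> {0..b}" "t \<in> {0..b}" using t h by (auto simp: h_def)
        then have "\<bar>\<Sum>k\<le>Suc n. c k*(t+h)^k\<bar> \<le> M" "\<bar>\<Sum>k\<le>Suc n. c k*t^k\<bar> \<le> M" using bd by auto
        then show "\<bar>\<Sum>j\<le>n. e j * t^j\<bar> \<le> 2*M" unfolding D[symmetric] by linarith
      qed
      from K1(2)[OF this] have "\<bar>e n\<bar> \<le> K1*(2*M)" by simp
      then have "\<bar>c (Suc n)\<bar> * (of_nat (Suc n) * h) \<le> K1*(2*M)" using h by (simp add: en abs_mult)
      moreover have "\<bar>c (Suc n)\<bar> * h \<le> \<bar>c (Suc n)\<bar> * (of_nat (Suc n) * h)"
        using h by (intro mult_left_mono) auto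
      ultimately have "\<bar>c (Suc n)\<bar> * h \<le> K1*(2*M)" by linarith
      then have cS: "\<bar>c (Suc n)\<bar> \<le> B*M" using h by (simp add: B_def field_simps)
      have "\<forall>t\<in>{0..b}. \<bar>\<Sum>k\<le>n. c k * t^k\<bar> \<le> M*(1+B*b^Suc n)"
      proof
        fix t assume t: "t \<in> {0..b}"
        have "(\<Sum>k\<le>n. c k * t^k) = (\<Sum>k\<le>Suc n. c k * t^k) - c (Suc n) * t^Suc n" by simp
        moreover have "\<bar>c (Suc n) * t^Suc n\<bar> \<le> (B*M) * b^Suc n"
          unfolding abs_mult using t cS by (intro mult_mono) (auto intro: power_mono simp: B M simp del: power_Suc)
        moreover have "\<bar>\<Sum>k\<le>Suc n. c k * t^k\<bar> \<le> M" using bd t by auto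
        ultimately show "\<bar>\<Sum>k\<le>n. c k * t^k\<bar> \<le> M*(1+B*b^Suc n)" by (simp add: algebra_simps)
      qed
      from K2(2)[OF this] have lo0: "\<forall>k\<le>n. \<bar>c k\<bar> \<le> (K2*(1+B*b^Suc n))*M"
        by (simp add: algebra_simps)
      have "(K2*(1+B*b^Suc n))*M \<le> K*M" using M by (intro mult_right_mono) (auto simp: K_def)
      with lo0 have lo: "\<forall>k\<le>n. \<bar>c k\<bar> \<le> K*M" by (meson order_trans)
      show "\<bar>c k\<bar> \<le> K*M"
      proof (cases "k = Suc n")
        case True
        then show ?thesis using cS M by (auto simp: K_def intro: order_trans[OF _ mult_right_mono[OF max.cobounded1]])
      next
        case False then show ?thesis using lo k by auto
      qed
    qed
  qed
qed

lemma powr_inv_pow: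
  fixes x :: real assumes "x \<ge> 0" "k > 0"
  shows "(x powr (1 / real k))^k = x"
proof (cases "x = 0")
  case True then show ?thesis using assms by simp
next
  case False
  then have "x > 0" using assms by simp
  then have "(x powr (1 / real k))^k = (x powr (1/real k)) powr real k"
    by (simp add: powr_realpow)
  also have "\<dots> = x" using assms by (simp add: powr_powr)
  finally show ?thesis .
qed

theorem proposition4p6:
  fixes m :: nat
  assumes "m \<ge> 2"
  shows "\<exists>c>0. \<forall>(A::real) (a::nat \<Rightarrow> real).
           A > 0 \<longrightarrow> a m \<noteq> 0 \<longrightarrow>
           convex_on {0..A} (\<lambda>x. \<Sum>k=2..m. a k * x ^ k) \<longrightarrow>
           (\<Sum>k=2..m. a k * A ^ k) > 1 \<longrightarrow>
           (\<exists>!\<mu>. \<mu> \<in> {0..A} \<and> (\<Sum>k=2..m. a k * \<mu> ^ k) = 1) \<and>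
           (\<forall>\<mu>\<in>{0..A}. (\<Sum>k=2..m. a k * \<mu> ^ k) = 1 \<longrightarrow>
              c * inverse (\<Sum>k=2..m. \<bar>a k\<bar> powr (1 / real k)) \<le> \<mu> \<and>
              \<mu> \<le> inverse c * inverse (\<Sum>k=2..m. \<bar>a k\<bar> powr (1 / real k)))"
proof -
  obtain K where K: "K \<ge> 0" "\<And>(c::nat\<Rightarrow>real) M. (\<forall>t\<in>{0..1}. \<bar>\<Sum>k\<le>m. c k * t^k\<bar> \<le> M) \<Longrightarrow> (\<forall>k\<le>m. \<bar>c k\<bar> \<le> K*M)"
    using coeff_bound[of m] by (meson zero_less_one)
  define K' where "K' = max 1 K"
  have K'1: "K' \<ge> 1" by (simp add: K'_def)
  have m1: "real (m-1) \<ge> 1" using assms by simp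
  define c where "c = 1 / (real (m-1) * K')"
  have c0: "c > 0" using K'1 m1 by (simp add: c_def)
  have x1': "real (m-1) * K' \<ge> 1 * 1" by (rule mult_mono[OF m1 K'1]) auto
  then have x1: "real (m-1) * K' \<ge> 1" by (simp only: mult_1)
  have c1: "c \<le> 1" using x1 unfolding c_def by (simp del: of_nat_diff)
  have invc: "inverse c = real (m-1) * K'" by (simp add: c_def)
  show ?thesis
  proof (intro exI[of _ c] conjI c0 allI impI)
    fix A :: real and a :: "nat \<Rightarrow> real"
    assume A: "A > 0" and am: "a m \<noteq> 0"
      and cvx: "convex_on {0..A} (\<lambda>x. \<Sum>k=2..m. a k * x ^ k)"
      and PA: "(\<Sum>k=2..m. a k * A ^ k) > 1"
    define P where "P x = (\<Sum>k=2..m. a k * x ^ k)" for x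
    have P0: "P 0 = 0" by (simp add: P_def)
    have cont: "isCont P x" for x unfolding P_def by (intro continuous_intros)
    have CV: "P (t*x) \<le> t * P x" if "x \<in> {0..A}" "0 \<le> t" "t \<le> 1" for x t
    proof -
      have "P ((1 - t) *\<^sub>R 0 + t *\<^sub>R x) \<le> (1 - t) * P 0 + t * P x"
        using convex_onD[OF cvx[folded P_def], of t 0 x] that A by simp
      then show ?thesis using P0 by simp
    qed
    have NN: "P x \<ge> 0" if x: "x \<in> {0..A}" for x
    proof -
      define g where "g t = (\<Sum>k=2..m. a k * x^k * t^(k-1))" for t :: real
      have gt: "g t * t = P (t*x)" for t
        unfolding g_def P_def sum_distrib_right
      proof (rule sum.cong[OF refl])
        fix k assume "k \<in> {2..m}"
        then have "k = Suc (k-1)" by simp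
        then have "t^(k-1) * t = t^k" by (metis power_Suc2)
        then show "a k * x ^ k * t ^ (k - 1) * t = a k * (t * x) ^ k"
          by (simp add: power_mult_distrib mult.assoc mult.left_commute)
      qed
      have g0: "g 0 = 0" unfolding g_def by (intro sum.neutral) auto
      have "isCont g 0" unfolding g_def by (intro continuous_intros)
      then have lim: "(g \<longlongrightarrow> 0) (at_right 0)"
        using tendsto_within_subset[OF \<open>isCont g 0\<close>[unfolded isCont_def], of "{0<..}"] g0 by simp
      have ev: "eventually (\<lambda>t. g t \<le> P x) (at_right 0)"
        using eventually_at_right_real[of 0 1, OF zero_less_one]
      proof (rule eventually_mono)
        fix t assume "t \<in> {0<..<(1::real)}"
        then have t: "0 < t" "t \<le> 1" by auto
        have "g t * t \<le> t * P x" using gt CV[OF x] t by simp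
        then show "g t \<le> P x" using t by (simp add: mult.commute)
      qed
      show ?thesis using tendsto_upperbound[OF lim ev] by simp
    qed
    have uniq: "x = y" if "x \<in> {0..A}" "y \<in> {0..A}" "P x = 1" "P y = 1" for x y
    proof (rule ccontr)
      have gen: False if "x \<in> {0..A}" "y \<in> {0..A}" "P x = 1" "P y = 1" "x < y" for x y
      proof -
        have y0: "y > 0" using that by auto
        have "P ((x/y)*y) \<le> (x/y) * P y" using CV[of y "x/y"] that y0 by auto
        then have "1 \<le> x/y" using that y0 by simp
        then show False using that y0 by (simp add: field_simps)
      qed
      assume "x \<noteq> y"
      then show False using gen[of x y] gen[of y x] that by (cases "x < y") auto
    qed
    have ex: "\<exists>x. 0 \<le> x \<and> x \<le> A \<and> P x = 1"
    proof -
      have PA': "1 \<le> P A" using PA by (simp add: P_def)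
      show ?thesis using IVT[where f=P and a=0 and y=1 and b=A] P0 PA' A cont by auto
    qed
    show "\<exists>!\<mu>. \<mu> \<in> {0..A} \<and> (\<Sum>k=2..m. a k * \<mu> ^ k) = 1"
      using ex uniq unfolding P_def[symmetric] by auto
    define S where "S = (\<Sum>k=2..m. \<bar>a k\<bar> powr (1 / real k))"
    have termnn: "\<bar>a k\<bar> powr (1 / real k) \<ge> 0" for k by simp
    have mem: "m \<in> {2..m}" using assms by simp
    have "\<bar>a m\<bar> powr (1 / real m) \<le> S"
      unfolding S_def by (rule member_le_sum[OF mem]) auto
    moreover have "\<bar>a m\<bar> powr (1 / real m) > 0" using am by simp
    ultimately have S0: "S > 0" by linarith
    show "\<forall>\<mu>\<in>{0..A}. (\<Sum>k=2..m. a k * \<mu> ^ k) = 1 \<longrightarrow>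
              c * inverse S \<le> \<mu> \<and> \<mu> \<le> inverse c * inverse S"
      unfolding S_def[symmetric]
    proof (intro ballI impI conjI)
      fix \<mu> assume mu: "\<mu> \<in> {0..A}" and Pmu': "(\<Sum>k=2..m. a k * \<mu> ^ k) = 1"
      have Pmu: "P \<mu> = 1" using Pmu' by (simp add: P_def)
      have mu0: "\<mu> > 0" using mu Pmu P0 by (cases "\<mu> = 0") auto
      have pw: "\<bar>a k\<bar> * \<mu>^k = (\<bar>a k\<bar> powr (1 / real k) * \<mu>)^k" if "k \<in> {2..m}" for k
        using that powr_inv_pow[of "\<bar>a k\<bar>" k] by (simp add: power_mult_distrib)
      have low: "1 \<le> S * \<mu>"
      proof (rule ccontr)
        assume "\<not> 1 \<le> S * \<mu>"
        then have Sl: "S * \<mu> < 1" by simp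
        have "S * \<mu> = (\<Sum>k=2..m. \<bar>a k\<bar> powr (1 / real k) * \<mu>)"
          by (simp add: S_def sum_distrib_right)
        have tle: "\<bar>a k\<bar> powr (1 / real k) * \<mu> \<le> S * \<mu>" if "k \<in> {2..m}" for k
        proof -
          have "\<bar>a k\<bar> powr (1 / real k) \<le> S" unfolding S_def
            by (rule member_le_sum[OF that]) auto
          then show ?thesis using mu0 by simp
        qed
        have "1 = P \<mu>" using Pmu by simp
        also have "\<dots> \<le> (\<Sum>k=2..m. \<bar>a k\<bar> * \<mu>^k)" unfolding P_def
        proof (rule sum_mono)
          fix k show "a k * \<mu>^k \<le> \<bar>a k\<bar> * \<mu>^k" using mu0 by (intro mult_right_mono) auto
        qed
        also have "\<dots> \<le> (\<Sum>k=2..m. \<bar>a k\<bar> powr (1 / real k) * \<mu>)"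
        proof (rule sum_mono)
          fix k assume k: "k \<in> {2..m}"
          have le1: "\<bar>a k\<bar> powr (1 / real k) * \<mu> \<le> 1" using tle[OF k] Sl by linarith
          have "(\<bar>a k\<bar> powr (1 / real k) * \<mu>)^k \<le> (\<bar>a k\<bar> powr (1 / real k) * \<mu>)^1"
            by (rule power_decreasing) (use k le1 mu0 in auto)
          then show "\<bar>a k\<bar> * \<mu>^k \<le> \<bar>a k\<bar> powr (1 / real k) * \<mu>" using pw[OF k] by simp
        qed
        also have "\<dots> = S * \<mu>" by (simp add: S_def sum_distrib_right)
        finally show False using Sl by simp
      qed
      define cc where "cc k = (if 2 \<le> k then a k * \<mu>^k else 0)" for k
      have "\<forall>t\<in>{0..1}. \<bar>\<Sum>k\<le>m. cc k * t^k\<bar> \<le> 1"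
      proof
        fix t :: real assume t: "t \<in> {0..1}"
        have "(\<Sum>k\<le>m. cc k * t^k) = (\<Sum>k\<in>{..m}. if 2 \<le> k then a k * \<mu>^k * t^k else 0)"
          by (rule sum.cong) (auto simp: cc_def)
        also have "\<dots> = (\<Sum>k\<in>{..m} \<inter> {k. 2 \<le> k}. a k * \<mu>^k * t^k)"
          by (simp add: sum.inter_restrict)
        also have "{..m} \<inter> {k. 2 \<le> k} = {2..m}" by auto
        also have "(\<Sum>k\<in>{2..m}. a k * \<mu>^k * t^k) = P (t*\<mu>)"
          by (simp add: P_def power_mult_distrib mult.assoc mult.commute mult.left_commute)
        finally have eq: "(\<Sum>k\<le>m. cc k * t^k) = P (t*\<mu>)" .
        have "t*\<mu> \<le> \<mu>" using t mu0 by (intro mult_left_le_one_le) auto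
        moreover have "0 \<le> t*\<mu>" using t mu0 by simp
        moreover have "\<mu> \<le> A" using mu by simp
        ultimately have tm: "t*\<mu> \<in> {0..A}" unfolding atLeastAtMost_iff by linarith
        have "P (t*\<mu>) \<le> t * P \<mu>" using CV[OF mu] t by auto
        also have "\<dots> \<le> 1" using t Pmu by simp
        finally show "\<bar>\<Sum>k\<le>m. cc k * t^k\<bar> \<le> 1" using NN[OF tm] eq by simp
      qed
      from K(2)[OF this] have Kc: "\<forall>k\<le>m. \<bar>cc k\<bar> \<le> K*1" .
      have Kb: "\<bar>a k\<bar> * \<mu>^k \<le> K" if "k \<in> {2..m}" for k
      proof -
        have "\<bar>cc k\<bar> \<le> K" using Kc that by auto
        moreover have "cc k = a k * \<mu>^k" using that by (simp add: cc_def)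
        ultimately show ?thesis using mu0 by (simp add: abs_mult)
      qed
      have up: "S * \<mu> \<le> real (m-1) * K'"
      proof -
        have "S * \<mu> = (\<Sum>k=2..m. \<bar>a k\<bar> powr (1 / real k) * \<mu>)"
          by (simp add: S_def sum_distrib_right)
        also have "\<dots> \<le> (\<Sum>k=2..m. K')"
        proof (rule sum_mono)
          fix k assume k: "k \<in> {2..m}"
          have "(\<bar>a k\<bar> powr (1 / real k) * \<mu>)^k \<le> K'^1" using Kb[OF k] pw[OF k] by (simp add: K'_def)
          also have "\<dots> \<le> K'^k" using K'1 k by (intro power_increasing) auto
          finally show "\<bar>a k\<bar> powr (1 / real k) * \<mu> \<le> K'"
            using power_mono_iff[of "\<bar>a k\<bar> powr (1 / real k) * \<mu>" K' k] K'1 k mu0 by simp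
        qed
        also have "\<dots> = real (m-1) * K'" using assms by simp
        finally show ?thesis .
      qed
      show "c * inverse S \<le> \<mu>"
      proof -
        have "c * inverse S \<le> inverse S" using c1 S0 by (simp add: mult_left_le_one_le)
        also have "inverse S \<le> \<mu>" using low S0 by (simp add: field_simps)
        finally show ?thesis .
      qed
      show "\<mu> \<le> inverse c * inverse S"
        unfolding invc using up S0 by (simp add: field_simps)
    qed
  qed
qed

end
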